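(* Let $p\ge q\ge d+1$ be positive integers. Let $\mathcal F$ be an infinite family of closed convex sets in $\mathbb R^d$ satisfying the $(d+1,d+1)$-property, and let $\mathcal B$ be a $(q-d)$-free family of $p-d$ convex sets in $\mathbb R^d$. If $\mathcal F\cup\mathcal B$ satisfies the $(p,q)$-property, then $\pi(\mathcal F)=1$, i.e., all members of $\mathcal F$ have a common point.
   Context: A family of at least $p$ sets satisfies the $(p,q)$-property if among any $p$ of its members there are $q$ with a common point. A family of convex sets in $\mathbb R^d$ is $m$-free if all its members are compact and no $m+1$ of its members have a common point. $\pi(\mathcal F)$ denotes the minimum number of points needed to meet every member of $\mathcal F$. *)

theory Defs
  imports "HOL-Analysis.Analysis"
begin

definition pq_property :: "nat \<Rightarrow> nat \<Rightarrow> 'a set set \<Rightarrow> bool" where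
  "pq_property p q F \<longleftrightarrow>
     (infinite F \<or> p \<le> card F) \<and>
     (\<forall>S\<subseteq>F. card S = p \<longrightarrow> (\<exists>T\<subseteq>S. card T = q \<and> \<Inter>T \<noteq> {}))"

definition m_free :: "nat \<Rightarrow> 'a::topological_space set set \<Rightarrow> bool" where
  "m_free m F \<longleftrightarrow>
     (\<forall>A\<in>F. compact A) \<and> (\<forall>S\<subseteq>F. card S = m + 1 \<longrightarrow> \<Inter>S = {})"

end

theory Submission
  imports Defs
begin

theorem lemma3p2:
  fixes F B :: "'a::euclidean_space set set" and p q :: nat
  defines "d \<equiv> DIM('a)"
  assumes "q \<ge> d + 1" and "p \<ge> q"
    and "infinite F" and "\<forall>A\<in>F. closed A \<and> convex A"
    and "pq_property (d + 1) (d + 1) F"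
    and "finite B" and "card B = p - d" and "\<forall>A\<in>B. convex A"
    and "m_free (q - d) B"
    and "pq_property p q (F \<union> B)"
  shows "\<Inter>F \<noteq> {}"
proof -
  note qd = assms(2) and pq = assms(3) and infF = assms(4) and clF = assms(5)
  have hF: "\<And>S. S \<subseteq> F \<Longrightarrow> card S = d + 1 \<Longrightarrow> \<Inter>S \<noteq> {}"
  proof -
    fix S assume S: "S \<subseteq> F" "card S = d + 1"
    from assms(6) S obtain T where "T \<subseteq> S" "card T = d + 1" "\<Inter>T \<noteq> {}"
      unfolding pq_property_def by blast
    moreover have "finite S" using S(2) by (intro card_ge_0_finite) auto
    ultimately have "T = S" using S(2) by (metis card_subset_eq)
    then show "\<Inter>S \<noteq> {}" using \<open>\<Inter>T \<noteq> {}\<close> by simp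
  qed
  have compB: "\<forall>A\<in>B. compact A" and freeB: "\<forall>S\<subseteq>B. card S = q - d + 1 \<longrightarrow> \<Inter>S = {}"
    using assms(10) unfolding m_free_def by auto
  have pqU: "\<And>S. S \<subseteq> F \<union> B \<Longrightarrow> card S = p \<Longrightarrow> \<exists>T\<subseteq>S. card T = q \<and> \<Inter>T \<noteq> {}"
    using assms(11) unfolding pq_property_def by blast
  define K where "K = convex hull (\<Union>B)"
  have compK: "compact K" unfolding K_def
    using compB assms(7) by (intro compact_convex_hull compact_Union) auto
  have convK: "convex K" unfolding K_def by simp
  have BK: "\<And>b. b \<in> B \<Longrightarrow> b \<subseteq> K" unfolding K_def
    by (meson Union_upper hull_subset subset_trans)
  have key: "\<And>D. D \<subseteq> F \<Longrightarrow> card D = d \<Longrightarrow> \<Inter>D \<inter> K \<noteq> {}"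
  proof -
    fix D assume D: "D \<subseteq> F" "card D = d"
    have dpos: "d \<ge> 1" unfolding d_def by (simp add: DIM_positive Suc_leI)
    have finD: "finite D" using D(2) dpos by (intro card_ge_0_finite) auto
    show "\<Inter>D \<inter> K \<noteq> {}"
    proof (cases "D \<inter> B = {}")
      case False
      then obtain b where b: "b \<in> D" "b \<in> B" by blast
      from infF finD obtain A where A: "A \<in> F" "A \<notin> D"
        by (metis D(1) finite_subset subsetI)
      have "card (insert A D) = d + 1" using A finD D(2) by simp
      moreover have "insert A D \<subseteq> F" using A D(1) by auto
      ultimately have "\<Inter>(insert A D) \<noteq> {}" using hF by blast
      then have "\<Inter>D \<noteq> {}" by auto
      moreover have "\<Inter>D \<subseteq> K" using b BK by blast
      ultimately show ?thesis by blast
    next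
      case True
      have cS: "card (D \<union> B) = p" using True finD assms(7) D(2) assms(8) qd pq
        by (simp add: card_Un_disjoint)
      then obtain T where T: "T \<subseteq> D \<union> B" "card T = q" "\<Inter>T \<noteq> {}"
        using pqU[of "D \<union> B"] D(1) by blast
      have finT: "finite T" using T(1) finD assms(7) finite_subset by blast
      have cT: "card T = card (T \<inter> D) + card (T \<inter> B)"
      proof -
        have "T = (T \<inter> D) \<union> (T \<inter> B)" using T(1) by blast
        then have "card T = card ((T \<inter> D) \<union> (T \<inter> B))" by simp
        also have "\<dots> = card (T \<inter> D) + card (T \<inter> B)"
          using finT True by (intro card_Un_disjoint) auto
        finally show ?thesis .
      qed
      have cTB: "card (T \<inter> B) \<le> q - d"
      proof (rule ccontr)
        assume "\<not> ?thesis"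
        then have "q - d + 1 \<le> card (T \<inter> B)" by simp
        then obtain U where U: "U \<subseteq> T \<inter> B" "card U = q - d + 1"
          by (rule obtain_subset_with_card_n)
        have "\<Inter>U = {}" using freeB U by blast
        moreover have "\<Inter>T \<subseteq> \<Inter>U" using U by blast
        ultimately show False using T(3) by blast
      qed
      have "card (T \<inter> D) \<le> d" using D(2) finD by (metis card_mono inf_le2)
      then have cTD: "card (T \<inter> D) = d" using cT cTB T(2) qd by linarith
      then have "T \<inter> D = D" using finD D(2) by (metis card_subset_eq inf_le2)
      then have DT: "D \<subseteq> T" by blast
      have "card (T \<inter> B) \<ge> 1" using cT cTD T(2) qd by linarith
      then obtain b where b: "b \<in> T" "b \<in> B" by (metis card.empty disjoint_iff not_one_le_zero inf_commute Int_iff)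
      have "\<Inter>T \<subseteq> \<Inter>D \<inter> K" using DT b BK by blast
      then show ?thesis using T(3) by blast
    qed
  qed
  have "K \<inter> \<Inter>F \<noteq> {}"
  proof (rule compact_imp_fip[OF compK])
    show "\<And>T. T \<in> F \<Longrightarrow> closed T" using clF by auto
  next
    fix G assume G: "finite G" "G \<subseteq> F"
    obtain X where X: "finite X" "card X = d + 1" "X \<subseteq> F"
      using infinite_arbitrarily_large[OF infF] by blast
    define G' where "G' = G \<union> X"
    have G'F: "G' \<subseteq> F" and finG': "finite G'" using G X by (auto simp: G'_def)
    have "card X \<le> card G'" using finG' by (simp add: G'_def card_mono)
    then have cG': "card G' \<ge> d + 1" using X by simp
    define H where "H = insert K G'"
    have "\<Inter>H \<noteq> {}"
    proof (rule Helly)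
      show "DIM('a) + 1 \<le> card H" using cG' finG' unfolding H_def d_def
        by (metis card_insert_le le_trans)
      show "\<forall>s\<in>H. convex s" using convK G'F clF unfolding H_def by auto
    next
      fix t assume t: "t \<subseteq> H" "card t = DIM('a) + 1"
      show "\<Inter>t \<noteq> {}"
      proof (cases "K \<in> t")
        case False
        then have "t \<subseteq> F" using t G'F unfolding H_def by auto
        then show ?thesis using hF t(2) unfolding d_def by auto
      next
        case True
        have fint: "finite t" using t(2) by (intro card_ge_0_finite) auto
        have "t - {K} \<subseteq> F" using t G'F unfolding H_def by auto
        moreover have "card (t - {K}) = d" using True fint t(2) unfolding d_def by simp
        ultimately have "\<Inter>(t - {K}) \<inter> K \<noteq> {}" using key by blast
        moreover have "\<Inter>t = \<Inter>(t - {K}) \<inter> K" using True by blast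
        ultimately show ?thesis by simp
      qed
    qed
    moreover have "\<Inter>H \<subseteq> K \<inter> \<Inter>G" unfolding H_def G'_def by blast
    ultimately show "K \<inter> \<Inter>G \<noteq> {}" by blast
  qed
  then show ?thesis by blast
qed

end
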